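(* Let $k>0$ be an integer and let $p$ be the unique positive real solution of $p^k+p-1=0$. For every instance of shuffled adversarial multi-agent delegation with $k$ agents and $n$ (not necessarily identically distributed) elements assigned uniformly at random to the agents, there exists a threshold mechanism $M$ such that, when the agents behave adversarially under $M$, $\mathbb{E}[\mathrm{Principal}]\ge p\,\mathbb{E}[\mathrm{Opt}]$, where $\mathrm{Opt}=\max_{e\in E}x(V(e))$ and the expectations are also over the random assignment.
   Context: Shuffled multi-agent delegation: there is a pool $E$ of $n$ elements; each element $e$ has a random outcome $V(e)$ drawn from a distribution $\mu(e)$ over its own outcome set $\Omega(e)$ (disjoint across elements), the $V(e)$ being mutually independent; each outcome $\omega$ has principal utility $x(\omega)\ge0$. Each element is given to a uniformly random one of the $k$ agents, independently of the other elements. Each agent knows which elements it received and observes their realized outcomes; the principal does not know the assignment, so its mechanism is fixed without it. Distributions are common knowledge. Single-proposal mechanism: the principal commits to acceptable sets of outcomes and a deterministic tie-breaking order on elements; each agent proposes one of its elements together with its observed outcome; the principal accepts, among acceptable proposed outcomes, one maximizing $x$ (ties broken by the order), and rejects if none; the principal gets $x(\omega)$ for an accepted truly observed outcome $\omega$, and $0$ otherwise. A threshold mechanism is a single-proposal mechanism given by a map $\theta:E\to\mathbb{R}$ such that an outcome $\omega$ of element $e$ is acceptable iff $x(\omega)\ge\theta(e)$ (strict thresholds $x(\omega)>\theta(e)$ are also allowed). Adversarial behavior: each agent chooses its action to minimize the principal's expected utility subject to keeping a positive probability of being the agent whose outcome is accepted. $\mathrm{Principal}$ denotes the principal's (random)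 utility. *)

theory Defs
  imports "HOL-Probability.Probability"
begin

text \<open>Outcomes of element e are values of type 'o; the
  outcome set of e is formally tagged by e (utility x e o), so outcome sets are disjoint.
  Agents are 0,...,k-1.  A state is a pair (sigma, V) of an assignment sigma : 'e => nat and
  the realized outcomes V : 'e => 'o.\<close>

type_synonym ('e,'o) state = "('e \<Rightarrow> nat) \<times> ('e \<Rightarrow> 'o)"

definition joint_pmf :: "'e set \<Rightarrow> nat \<Rightarrow> ('e \<Rightarrow> 'o pmf) \<Rightarrow> ('e,'o) state pmf" where
  "joint_pmf E k \<mu> =
     pair_pmf (Pi_pmf E 0 (\<lambda>_. pmf_of_set {..<k})) (Pi_pmf E undefined \<mu>)"

definition agent_set :: "'e set \<Rightarrow> ('e,'o) state \<Rightarrow> nat \<Rightarrow> 'e set" where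
  "agent_set E \<omega> i = {e \<in> E. fst \<omega> e = i}"

definition info :: "'e set \<Rightarrow> ('e,'o) state \<Rightarrow> nat \<Rightarrow> 'e set \<times> ('e \<Rightarrow> 'o)" where
  "info E \<omega> i = (agent_set E \<omega> i, restrict (snd \<omega>) (agent_set E \<omega> i))"

text \<open>A strategy profile: agent i maps its information to a proposal (None = no proposal).\<close>
type_synonym ('e,'o) profile = "nat \<Rightarrow> 'e set \<Rightarrow> ('e \<Rightarrow> 'o) \<Rightarrow> 'e option"

definition valid_action :: "'e set \<Rightarrow> ('e,'o) state \<Rightarrow> nat \<Rightarrow> 'e option \<Rightarrow> bool" where
  "valid_action E \<omega> i a \<longleftrightarrow> a = None \<or> (\<exists>e. a = Some e \<and> e \<in> agent_set E \<omega> i)"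

definition profile_acts :: "'e set \<Rightarrow> ('e,'o) profile \<Rightarrow> ('e,'o) state \<Rightarrow> nat \<Rightarrow> 'e option" where
  "profile_acts E s \<omega> = (\<lambda>j. case_prod (s j) (info E \<omega> j))"

definition threshold_acc ::
  "('e \<Rightarrow> 'o \<Rightarrow> real) \<Rightarrow> ('e \<Rightarrow> real) \<Rightarrow> ('e \<Rightarrow> bool) \<Rightarrow> 'e \<Rightarrow> 'o \<Rightarrow> bool" where
  "threshold_acc x \<theta> strict e v \<longleftrightarrow> (if strict e then x e v > \<theta> e else x e v \<ge> \<theta> e)"

definition acc_props :: "'e set \<Rightarrow> nat \<Rightarrow> ('e \<Rightarrow> 'o \<Rightarrow> bool) \<Rightarrow> ('e,'o) state
    \<Rightarrow> (nat \<Rightarrow> 'e option) \<Rightarrow> 'e set" where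
  "acc_props E k acc \<omega> A =
     {e \<in> E. \<exists>j<k. A j = Some e \<and> fst \<omega> e = j \<and> acc e (snd \<omega> e)}"

definition is_winner :: "('e \<Rightarrow> 'o \<Rightarrow> real) \<Rightarrow> ('e \<Rightarrow> nat) \<Rightarrow> 'e set \<Rightarrow> ('e \<Rightarrow> 'o) \<Rightarrow> 'e \<Rightarrow> bool" where
  "is_winner x rk P V e \<longleftrightarrow> e \<in> P \<and>
     (\<forall>e'\<in>P. x e' (V e') < x e (V e) \<or> (x e' (V e') = x e (V e) \<and> rk e \<le> rk e'))"

definition accepted :: "'e set \<Rightarrow> nat \<Rightarrow> ('e \<Rightarrow> 'o \<Rightarrow> real) \<Rightarrow> ('e \<Rightarrow> 'o \<Rightarrow> bool) \<Rightarrow> ('e \<Rightarrow> nat)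
    \<Rightarrow> ('e,'o) state \<Rightarrow> (nat \<Rightarrow> 'e option) \<Rightarrow> 'e option" where
  "accepted E k x acc rk \<omega> A =
     (let P = acc_props E k acc \<omega> A in
      if \<exists>e. is_winner x rk P (snd \<omega>) e then Some (THE e. is_winner x rk P (snd \<omega>) e)
      else None)"

definition principal :: "'e set \<Rightarrow> nat \<Rightarrow> ('e \<Rightarrow> 'o \<Rightarrow> real) \<Rightarrow> ('e \<Rightarrow> 'o \<Rightarrow> bool) \<Rightarrow> ('e \<Rightarrow> nat)
    \<Rightarrow> ('e,'o) state \<Rightarrow> (nat \<Rightarrow> 'e option) \<Rightarrow> real" where
  "principal E k x acc rk \<omega> A =
     (case accepted E k x acc rk \<omega> A of None \<Rightarrow> 0 | Some e \<Rightarrow> x e (snd \<omega> e))"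

definition accepted_agent :: "'e set \<Rightarrow> nat \<Rightarrow> ('e \<Rightarrow> 'o \<Rightarrow> real) \<Rightarrow> ('e \<Rightarrow> 'o \<Rightarrow> bool)
    \<Rightarrow> ('e \<Rightarrow> nat) \<Rightarrow> ('e,'o) state \<Rightarrow> (nat \<Rightarrow> 'e option) \<Rightarrow> nat option" where
  "accepted_agent E k x acc rk \<omega> A = map_option (fst \<omega>) (accepted E k x acc rk \<omega> A)"

text \<open>If no action has positive acceptance probability, the action is only
  required to be valid.\<close>
definition adversarial :: "'e set \<Rightarrow> nat \<Rightarrow> ('e \<Rightarrow> 'o pmf) \<Rightarrow> ('e \<Rightarrow> 'o \<Rightarrow> real)
    \<Rightarrow> ('e \<Rightarrow> 'o \<Rightarrow> bool) \<Rightarrow> ('e \<Rightarrow> nat) \<Rightarrow> ('e,'o) profile \<Rightarrow> bool" where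
  "adversarial E k \<mu> x acc rk s \<longleftrightarrow>
     (\<forall>\<omega>\<in>set_pmf (joint_pmf E k \<mu>). \<forall>i<k.
        valid_action E \<omega> i (profile_acts E s \<omega> i) \<and>
        (let C = cond_pmf (joint_pmf E k \<mu>) {\<omega>'. info E \<omega>' i = info E \<omega> i};
             Feas = {a. valid_action E \<omega> i a \<and>
                        measure_pmf.prob C
                          {\<omega>'. accepted_agent E k x acc rk \<omega>' ((profile_acts E s \<omega>')(i := a)) = Some i}
                        > 0}
         in Feas \<noteq> {} \<longrightarrow>
            (profile_acts E s \<omega> i \<in> Feas \<and>
             (\<forall>a\<in>Feas.
                measure_pmf.expectation C (\<lambda>\<omega>'. principal E k x acc rk \<omega>' (profile_acts E s \<omega>'))
                \<le> measure_pmf.expectation C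
                     (\<lambda>\<omega>'. principal E k x acc rk \<omega>' ((profile_acts E s \<omega>')(i := a)))))))"

text \<open>Opt = max over elements of realized utility (0 inserted; irrelevant as x >= 0).\<close>
definition opt :: "'e set \<Rightarrow> ('e \<Rightarrow> 'o \<Rightarrow> real) \<Rightarrow> ('e,'o) state \<Rightarrow> real" where
  "opt E x \<omega> = Max (insert 0 ((\<lambda>e. x e (snd \<omega> e)) ` E))"

end

theory Submission
  imports Defs
begin

lemma winner_exists:
  assumes "finite P" "P \<noteq> {}"
  shows "\<exists>e. is_winner x rk P V e"
proof -
  define m where "m = Max ((\<lambda>e. x e (V e)) ` P)"
  define P' where "P' = {e\<in>P. x e (V e) = m}"
  have "m \<in> (\<lambda>e. x e (V e)) ` P" unfolding m_def using assms by (intro Max_in) auto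
  then have P'ne: "P' \<noteq> {}" unfolding P'_def by auto
  have finP': "finite P'" unfolding P'_def using assms by auto
  define r where "r = Min (rk ` P')"
  have "r \<in> rk ` P'" unfolding r_def using P'ne finP' by (intro Min_in) auto
  then obtain e0 where e0: "e0 \<in> P'" "rk e0 = r" by auto
  have "is_winner x rk P V e0"
    unfolding is_winner_def
  proof (intro conjI ballI)
    show "e0 \<in> P" using e0 unfolding P'_def by auto
    fix e' assume e': "e' \<in> P"
    have le: "x e' (V e') \<le> m" unfolding m_def using assms e' by (intro Max_ge) auto
    have eq: "x e0 (V e0) = m" using e0 unfolding P'_def by auto
    show "x e' (V e') < x e0 (V e0) \<or> x e' (V e') = x e0 (V e0) \<and> rk e0 \<le> rk e'"
    proof (cases "x e' (V e') = m")
      case True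
      then have "e' \<in> P'" using e' unfolding P'_def by auto
      then have "r \<le> rk e'" unfolding r_def using finP' by (intro Min_le) auto
      then show ?thesis using True eq e0 by auto
    next
      case False
      then show ?thesis using le eq by auto
    qed
  qed
  then show ?thesis by blast
qed

lemma winner_unique:
  assumes "inj_on rk P" "is_winner x rk P V a" "is_winner x rk P V b"
  shows "a = b"
proof -
  have a: "a \<in> P" and b: "b \<in> P" using assms unfolding is_winner_def by auto
  have "x b (V b) < x a (V a) \<or> x b (V b) = x a (V a) \<and> rk a \<le> rk b"
    using assms(2) b unfolding is_winner_def by auto
  moreover have "x a (V a) < x b (V b) \<or> x a (V a) = x b (V b) \<and> rk b \<le> rk a"
    using assms(3) a unfolding is_winner_def by auto
  ultimately have "rk a = rk b" by auto
  then show ?thesis using assms(1) a b by (auto dest: inj_onD)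
qed

lemma acc_props_sub: "acc_props E k acc \<omega> A \<subseteq> E"
  unfolding acc_props_def by auto

lemma accepted_some:
  assumes "finite E" "inj_on rk E" "acc_props E k acc \<omega> A \<noteq> {}"
  shows "\<exists>w. accepted E k x acc rk \<omega> A = Some w \<and> is_winner x rk (acc_props E k acc \<omega> A) (snd \<omega>) w"
proof -
  let ?P = "acc_props E k acc \<omega> A"
  have fin: "finite ?P" using assms(1) acc_props_sub finite_subset by metis
  obtain w where w: "is_winner x rk ?P (snd \<omega>) w" using winner_exists[OF fin assms(3)] by blast
  have inj: "inj_on rk ?P" using assms(2) acc_props_sub inj_on_subset by metis
  have "(THE e. is_winner x rk ?P (snd \<omega>) e) = w"
    using w winner_unique[OF inj] by blast
  then show ?thesis using w unfolding accepted_def Let_def by auto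
qed

lemma principal_ge:
  assumes "finite E" "inj_on rk E" "e \<in> acc_props E k acc \<omega> A"
  shows "principal E k x acc rk \<omega> A \<ge> x e (snd \<omega> e)"
proof -
  obtain w where w: "accepted E k x acc rk \<omega> A = Some w"
     "is_winner x rk (acc_props E k acc \<omega> A) (snd \<omega>) w"
    using accepted_some[OF assms(1,2)] assms(3) by blast
  then have "x e (snd \<omega> e) \<le> x w (snd \<omega> w)" using assms(3) unfolding is_winner_def by force
  then show ?thesis using w unfolding principal_def by auto
qed

lemma principal_nonneg:
  assumes "\<forall>e v. x e v \<ge> 0"
  shows "principal E k x acc rk \<omega> A \<ge> 0"
  unfolding principal_def using assms by (auto split: option.splits)

lemma accepted_in:
  assumes "finite E" "inj_on rk E" "accepted E k x acc rk \<omega> A = Some w"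
  shows "is_winner x rk (acc_props E k acc \<omega> A) (snd \<omega>) w"
proof -
  let ?P = "acc_props E k acc \<omega> A"
  have ex: "\<exists>e. is_winner x rk ?P (snd \<omega>) e" and w: "w = (THE e. is_winner x rk ?P (snd \<omega>) e)"
    using assms unfolding accepted_def Let_def by (auto split: if_splits)
  have inj: "inj_on rk ?P" using assms(2) acc_props_sub inj_on_subset by metis
  show ?thesis using ex w winner_unique[OF inj] by (metis theI)
qed

lemma info_eq_D:
  assumes "info E \<omega>' i = info E \<omega> i"
  shows "agent_set E \<omega>' i = agent_set E \<omega> i"
    and "\<And>e. e \<in> agent_set E \<omega> i \<Longrightarrow> snd \<omega>' e = snd \<omega> e"
    and "\<And>s. profile_acts E s \<omega>' i = profile_acts E s \<omega> i"
proof -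
  show a: "agent_set E \<omega>' i = agent_set E \<omega> i" using assms unfolding info_def by auto
  fix e assume "e \<in> agent_set E \<omega> i"
  then show "snd \<omega>' e = snd \<omega> e" using assms a unfolding info_def by (metis prod.inject restrict_apply')
next
  fix s show "profile_acts E s \<omega>' i = profile_acts E s \<omega> i"
    unfolding profile_acts_def using assms by simp
qed

lemma prob_pos_ex: "measure_pmf.prob p S > 0 \<Longrightarrow> \<exists>x\<in>set_pmf p. x \<in> S"
  using measure_pmf_zero_iff[of p S] by fastforce

lemma prob_zero_notin: "measure_pmf.prob p S = 0 \<Longrightarrow> x \<in> set_pmf p \<Longrightarrow> x \<notin> S"
  using measure_pmf_zero_iff[of p S] by blast

lemma key_L:
  assumes fin: "finite E" and inj: "inj_on rk E"
    and adv: "adversarial E k \<mu> x acc rk s"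
    and om: "\<omega> \<in> set_pmf (joint_pmf E k \<mu>)" and ik: "i < k"
    and eA: "e \<in> agent_set E \<omega> i" and acce: "acc e (snd \<omega> e)"
  shows "\<exists>e'\<in>acc_props E k acc \<omega> (profile_acts E s \<omega>).
            fst \<omega> e' = i \<or> x e' (snd \<omega> e') \<ge> x e (snd \<omega> e)"
proof -
  let ?J = "joint_pmf E k \<mu>"
  let ?I = "{\<omega>'. info E \<omega>' i = info E \<omega> i}"
  let ?C = "cond_pmf ?J ?I"
  let ?A = "profile_acts E s \<omega>"
  define Feas where "Feas = {a. valid_action E \<omega> i a \<and>
                        measure_pmf.prob ?C
                          {\<omega>'. accepted_agent E k x acc rk \<omega>' ((profile_acts E s \<omega>')(i := a)) = Some i}
                        > 0}"
  have ne: "set_pmf ?J \<inter> ?I \<noteq> {}" using om by auto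
  have setC: "set_pmf ?C = set_pmf ?J \<inter> ?I" using set_cond_pmf[OF ne] .
  have omC: "\<omega> \<in> set_pmf ?C" using setC om by auto
  have H: "valid_action E \<omega> i (?A i) \<and>
        (let C = ?C;
             Feas = {a. valid_action E \<omega> i a \<and>
                        measure_pmf.prob C
                          {\<omega>'. accepted_agent E k x acc rk \<omega>' ((profile_acts E s \<omega>')(i := a)) = Some i}
                        > 0}
         in Feas \<noteq> {} \<longrightarrow>
            (?A i \<in> Feas \<and>
             (\<forall>a\<in>Feas.
                measure_pmf.expectation C (\<lambda>\<omega>'. principal E k x acc rk \<omega>' (profile_acts E s \<omega>'))
                \<le> measure_pmf.expectation C
                     (\<lambda>\<omega>'. principal E k x acc rk \<omega>' ((profile_acts E s \<omega>')(i := a))))))"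
    using adv om ik unfolding adversarial_def by blast
  have advi: "Feas \<noteq> {} \<longrightarrow> ?A i \<in> Feas"
    using H unfolding Let_def Feas_def[symmetric] by blast
  have eE: "e \<in> E" and fe: "fst \<omega> e = i" using eA unfolding agent_set_def by auto
  show ?thesis
  proof (cases "Feas = {}")
    case False
    then have AF: "?A i \<in> Feas" using advi by blast
    then have pos: "measure_pmf.prob ?C
         {\<omega>'. accepted_agent E k x acc rk \<omega>' ((profile_acts E s \<omega>')(i := ?A i)) = Some i} > 0"
      unfolding Feas_def by blast
    then obtain \<omega>' where om': "\<omega>' \<in> set_pmf ?C"
      and acc': "accepted_agent E k x acc rk \<omega>' ((profile_acts E s \<omega>')(i := ?A i)) = Some i"
      using prob_pos_ex[OF pos] by blast
    have infoeq: "info E \<omega>' i = info E \<omega> i" using om' setC by auto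
    obtain w where w: "accepted E k x acc rk \<omega>' ((profile_acts E s \<omega>')(i := ?A i)) = Some w"
       and fw: "fst \<omega>' w = i"
      using acc' unfolding accepted_agent_def by auto
    have win: "is_winner x rk (acc_props E k acc \<omega>' ((profile_acts E s \<omega>')(i := ?A i))) (snd \<omega>') w"
      using accepted_in[OF fin inj w] .
    then have "w \<in> acc_props E k acc \<omega>' ((profile_acts E s \<omega>')(i := ?A i))"
      unfolding is_winner_def by blast
    then have wE: "w \<in> E" and Aiw: "?A i = Some w" and accw': "acc w (snd \<omega>' w)"
      unfolding acc_props_def using fw by (auto split: if_splits)
    have wA: "w \<in> agent_set E \<omega> i"
      using info_eq_D(1)[OF infoeq] wE fw unfolding agent_set_def by blast
    have "snd \<omega>' w = snd \<omega> w" using info_eq_D(2)[OF infoeq wA] .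
    then have "w \<in> acc_props E k acc \<omega> ?A" and "fst \<omega> w = i"
      using wA Aiw accw' ik unfolding acc_props_def agent_set_def by auto
    then show ?thesis by blast
  next
    case True
    have valid: "valid_action E \<omega> i (Some e)" using eA unfolding valid_action_def by auto
    then have "\<not> measure_pmf.prob ?C
         {\<omega>'. accepted_agent E k x acc rk \<omega>' ((profile_acts E s \<omega>')(i := Some e)) = Some i} > 0"
      using True unfolding Feas_def by blast
    then have "measure_pmf.prob ?C
         {\<omega>'. accepted_agent E k x acc rk \<omega>' ((profile_acts E s \<omega>')(i := Some e)) = Some i} = 0"
      by (simp add: zero_less_measure_iff)
    then have nacc: "accepted_agent E k x acc rk \<omega> (?A(i := Some e)) \<noteq> Some i"
      using prob_zero_notin[OF _ omC] by blast
    have eP: "e \<in> acc_props E k acc \<omega> (?A(i := Some e))"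
      unfolding acc_props_def using eE fe ik acce by auto
    then obtain w where w: "accepted E k x acc rk \<omega> (?A(i := Some e)) = Some w"
        and win: "is_winner x rk (acc_props E k acc \<omega> (?A(i := Some e))) (snd \<omega>) w"
      using accepted_some[OF fin inj, of k acc \<omega> "?A(i := Some e)" x] by blast
    have fw: "fst \<omega> w \<noteq> i" using nacc w unfolding accepted_agent_def by auto
    have "w \<in> acc_props E k acc \<omega> (?A(i := Some e))" using win unfolding is_winner_def by blast
    then have wP: "w \<in> acc_props E k acc \<omega> ?A"
      using fw unfolding acc_props_def by (auto split: if_splits)
    have "x e (snd \<omega> e) \<le> x w (snd \<omega> w)" using win eP unfolding is_winner_def by force
    then show ?thesis using wP by blast
  qed
qed

definition below :: "('e \<Rightarrow> 'o \<Rightarrow> real) \<Rightarrow> ('e \<Rightarrow> nat) \<Rightarrow> 'e \<Rightarrow> 'o \<Rightarrow> 'e \<Rightarrow> 'o \<Rightarrow> bool" where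
  "below x rk e' w e v \<longleftrightarrow> x e' w < x e v \<or> (x e' w = x e v \<and> rk e < rk e')"

definition hl :: "'e set \<Rightarrow> ('e \<Rightarrow> 'o \<Rightarrow> real) \<Rightarrow> ('e \<Rightarrow> nat) \<Rightarrow> ('e \<Rightarrow> 'o \<Rightarrow> bool) \<Rightarrow> real
    \<Rightarrow> ('e,'o) state \<Rightarrow> 'e \<Rightarrow> real" where
  "hl E x rk acc \<tau> \<omega> e = (if x e (snd \<omega> e) > \<tau> \<and> (\<forall>e'\<in>E-{e}. below x rk e' (snd \<omega> e') e (snd \<omega> e))
      \<and> (\<forall>e'\<in>E-{e}. \<not> (acc e' (snd \<omega> e') \<and> fst \<omega> e' = fst \<omega> e)) then x e (snd \<omega> e) - \<tau> else 0)"

definition hh :: "'e set \<Rightarrow> ('e \<Rightarrow> 'o \<Rightarrow> real) \<Rightarrow> ('e \<Rightarrow> nat) \<Rightarrow> real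
    \<Rightarrow> ('e,'o) state \<Rightarrow> 'e \<Rightarrow> real" where
  "hh E x rk \<tau> \<omega> e = (if x e (snd \<omega> e) > \<tau> \<and> (\<forall>e'\<in>E-{e}. below x rk e' (snd \<omega> e') e (snd \<omega> e))
      then x e (snd \<omega> e) - \<tau> else 0)"

lemma hl_nonneg: "hl E x rk acc \<tau> \<omega> e \<ge> 0" unfolding hl_def by auto
lemma hh_nonneg: "hh E x rk \<tau> \<omega> e \<ge> 0" unfolding hh_def by auto

lemma support_assign:
  assumes "finite E" "k > 0" "\<omega> \<in> set_pmf (joint_pmf E k \<mu>)" "e \<in> E"
  shows "fst \<omega> e < k"
proof -
  have "fst \<omega> \<in> set_pmf (Pi_pmf E 0 (\<lambda>_. pmf_of_set {..<k}))"
  proof -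
    have "\<omega> \<in> set_pmf (Pi_pmf E 0 (\<lambda>_. pmf_of_set {..<k})) \<times> set_pmf (Pi_pmf E undefined \<mu>)"
      using assms(3) unfolding joint_pmf_def set_pair_pmf .
    then show ?thesis by (rule mem_Times_iff[THEN iffD1, THEN conjunct1])
  qed
  then have "fst \<omega> \<in> PiE_dflt E 0 (set_pmf \<circ> (\<lambda>_. pmf_of_set {..<k}))"
    by (simp only: set_Pi_pmf[OF assms(1)])
  then have "fst \<omega> e \<in> set_pmf (pmf_of_set {..<k})" using assms(4) unfolding PiE_dflt_def o_def by blast
  moreover have "set_pmf (pmf_of_set {..<k}) = {..<k}" using assms(2) by (intro set_pmf_of_set) auto
  ultimately show ?thesis by simp
qed

lemma PW1:
  assumes fin: "finite E" and inj: "inj_on rk E" and kpos: "k > 0"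
    and adv: "adversarial E k \<mu> x acc rk s"
    and om: "\<omega> \<in> set_pmf (joint_pmf E k \<mu>)"
    and accge: "\<And>e v. acc e v \<Longrightarrow> x e v \<ge> \<tau>"
    and accgt: "\<And>e v. x e v > \<tau> \<Longrightarrow> acc e v"
    and xnn: "\<forall>e v. x e v \<ge> 0"
  shows "principal E k x acc rk \<omega> (profile_acts E s \<omega>) \<ge>
          \<tau> * (if \<exists>e\<in>E. acc e (snd \<omega> e) then 1 else 0) + (\<Sum>e\<in>E. hl E x rk acc \<tau> \<omega> e)"
proof -
  let ?Pr = "principal E k x acc rk \<omega> (profile_acts E s \<omega>)"
  have L: "\<exists>e'\<in>acc_props E k acc \<omega> (profile_acts E s \<omega>).
            fst \<omega> e' = fst \<omega> e \<or> x e' (snd \<omega> e') \<ge> x e (snd \<omega> e)"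
    if "e \<in> E" "acc e (snd \<omega> e)" for e
  proof -
    have Ai: "e \<in> agent_set E \<omega> (fst \<omega> e)" unfolding agent_set_def using that by auto
    show ?thesis using key_L[OF fin inj adv om support_assign[OF fin kpos om that(1)] Ai that(2)] .
  qed
  show ?thesis
  proof (cases "\<exists>e\<in>E. hl E x rk acc \<tau> \<omega> e \<noteq> 0")
    case True
    then obtain e where eE: "e \<in> E" and hne: "hl E x rk acc \<tau> \<omega> e \<noteq> 0" by blast
    have c: "x e (snd \<omega> e) > \<tau>" "\<forall>e'\<in>E-{e}. below x rk e' (snd \<omega> e') e (snd \<omega> e)"
      "\<forall>e'\<in>E-{e}. \<not> (acc e' (snd \<omega> e') \<and> fst \<omega> e' = fst \<omega> e)"
      using hne unfolding hl_def by (auto split: if_splits)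
    have others: "hl E x rk acc \<tau> \<omega> e2 = 0" if "e2 \<in> E" "e2 \<noteq> e" for e2
    proof (rule ccontr)
      assume "hl E x rk acc \<tau> \<omega> e2 \<noteq> 0"
      then have "below x rk e (snd \<omega> e) e2 (snd \<omega> e2)" using eE that unfolding hl_def by (auto split: if_splits)
      moreover have "below x rk e2 (snd \<omega> e2) e (snd \<omega> e)" using c(2) that by auto
      ultimately show False unfolding below_def by auto
    qed
    have "(\<Sum>e\<in>E. hl E x rk acc \<tau> \<omega> e) = hl E x rk acc \<tau> \<omega> e + (\<Sum>e2\<in>E-{e}. hl E x rk acc \<tau> \<omega> e2)"
      using fin eE by (rule sum.remove)
    also have "(\<Sum>e2\<in>E-{e}. hl E x rk acc \<tau> \<omega> e2) = 0" using others by (intro sum.neutral) auto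
    also have "hl E x rk acc \<tau> \<omega> e = x e (snd \<omega> e) - \<tau>" using c unfolding hl_def by auto
    finally have sum: "(\<Sum>e\<in>E. hl E x rk acc \<tau> \<omega> e) = x e (snd \<omega> e) - \<tau>" by simp
    have acce: "acc e (snd \<omega> e)" using accgt c(1) .
    obtain e' where e'P: "e' \<in> acc_props E k acc \<omega> (profile_acts E s \<omega>)"
      and e'c: "fst \<omega> e' = fst \<omega> e \<or> x e' (snd \<omega> e') \<ge> x e (snd \<omega> e)"
      using L[OF eE acce] by blast
    have e'E: "e' \<in> E" and acce': "acc e' (snd \<omega> e')" using e'P unfolding acc_props_def by auto
    have "x e' (snd \<omega> e') \<ge> x e (snd \<omega> e)"
    proof (cases "e' = e")
      case False
      then have "fst \<omega> e' \<noteq> fst \<omega> e" using c(3) e'E acce' by auto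
      then show ?thesis using e'c by auto
    qed simp
    then have "?Pr \<ge> x e (snd \<omega> e)" using principal_ge[OF fin inj e'P, where x=x] by linarith
    then show ?thesis using sum eE acce by auto
  next
    case False
    then have sum: "(\<Sum>e\<in>E. hl E x rk acc \<tau> \<omega> e) = 0" by auto
    show ?thesis
    proof (cases "\<exists>e\<in>E. acc e (snd \<omega> e)")
      case True
      then obtain e where eE: "e \<in> E" and acce: "acc e (snd \<omega> e)" by blast
      obtain e' where e'P: "e' \<in> acc_props E k acc \<omega> (profile_acts E s \<omega>)"
        using L[OF eE acce] by blast
      have "acc e' (snd \<omega> e')" using e'P unfolding acc_props_def by auto
      then have "x e' (snd \<omega> e') \<ge> \<tau>" by (rule accge)
      then have "?Pr \<ge> \<tau>" using principal_ge[OF fin inj e'P, where x=x] by linarith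
      then show ?thesis using sum True by auto
    next
      case False
      then show ?thesis using sum principal_nonneg[OF xnn, where E=E and k=k and acc=acc and rk=rk and \<omega>=\<omega> and A="profile_acts E s \<omega>"] by simp
    qed
  qed
qed

lemma PW2:
  assumes fin: "finite E" and inj: "inj_on rk E" and tau: "\<tau> \<ge> 0"
  shows "opt E x \<omega> \<le> \<tau> + (\<Sum>e\<in>E. hh E x rk \<tau> \<omega> e)"
proof (cases "E = {}")
  case True
  then show ?thesis unfolding opt_def using tau by simp
next
  case False
  let ?f = "\<lambda>e. x e (snd \<omega> e)"
  obtain e0 where e0: "is_winner x rk E (snd \<omega>) e0" using winner_exists[OF fin False] by blast
  have e0E: "e0 \<in> E" using e0 unfolding is_winner_def by auto
  have bel: "\<forall>e'\<in>E-{e0}. below x rk e' (snd \<omega> e') e0 (snd \<omega> e0)"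
  proof
    fix e' assume e': "e' \<in> E - {e0}"
    then have "rk e' \<noteq> rk e0" using inj e0E by (auto dest: inj_onD)
    then show "below x rk e' (snd \<omega> e') e0 (snd \<omega> e0)"
      using e0 e' unfolding is_winner_def below_def by force
  qed
  have maxle: "?f e \<le> ?f e0" if "e \<in> E" for e using e0 that unfolding is_winner_def by force
  have "opt E x \<omega> = max 0 (?f e0)"
  proof -
    have "Max (insert 0 (?f ` E)) = max 0 (Max (?f ` E))"
      using fin False by (subst Max_insert) auto
    also have "Max (?f ` E) = ?f e0"
      using fin e0E maxle by (intro Max_eqI) auto
    finally show ?thesis unfolding opt_def .
  qed
  also have "\<dots> \<le> \<tau> + hh E x rk \<tau> \<omega> e0"
    using bel tau unfolding hh_def by auto
  also have "hh E x rk \<tau> \<omega> e0 \<le> (\<Sum>e\<in>E. hh E x rk \<tau> \<omega> e)"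
    using fin e0E hh_nonneg[of E x rk \<tau> \<omega>] by (intro member_le_sum) auto
  finally show ?thesis by simp
qed

lemma exp_pair_iter:
  fixes F :: "'a \<times> 'b \<Rightarrow> real"
  assumes fA: "finite (set_pmf A)" and fB: "finite (set_pmf B)"
  shows "measure_pmf.expectation (pair_pmf A B) F =
         measure_pmf.expectation A (\<lambda>a. measure_pmf.expectation B (\<lambda>b. F (a,b)))"
proof -
  have "measure_pmf.expectation (pair_pmf A B) F =
        (\<Sum>ab\<in>set_pmf A \<times> set_pmf B. F ab * pmf (pair_pmf A B) ab)"
    by (rule integral_measure_pmf_real) (use fA fB in auto)
  also have "\<dots> = (\<Sum>ab\<in>set_pmf A \<times> set_pmf B. F ab * (pmf A (fst ab) * pmf B (snd ab)))"
    by (rule sum.cong) (auto simp: pmf_pair)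
  also have "\<dots> = (\<Sum>a\<in>set_pmf A. \<Sum>b\<in>set_pmf B. F (a,b) * (pmf A a * pmf B b))"
    by (simp add: sum.cartesian_product case_prod_beta)
  also have "\<dots> = (\<Sum>a\<in>set_pmf A. (\<Sum>b\<in>set_pmf B. F (a,b) * pmf B b) * pmf A a)"
    by (simp add: sum_distrib_right sum_distrib_left mult.assoc mult.commute mult.left_commute)
  also have "\<dots> = (\<Sum>a\<in>set_pmf A. measure_pmf.expectation B (\<lambda>b. F (a,b)) * pmf A a)"
  proof (rule sum.cong[OF refl])
    fix a
    have "measure_pmf.expectation B (\<lambda>b. F (a,b)) = (\<Sum>b\<in>set_pmf B. F (a,b) * pmf B b)"
      by (rule integral_measure_pmf_real) (use fB in auto)
    then show "(\<Sum>b\<in>set_pmf B. F (a,b) * pmf B b) * pmf A a =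
               measure_pmf.expectation B (\<lambda>b. F (a,b)) * pmf A a" by simp
  qed
  also have "\<dots> = measure_pmf.expectation A (\<lambda>a. measure_pmf.expectation B (\<lambda>b. F (a,b)))"
    by (rule integral_measure_pmf_real[symmetric]) (use fA in auto)
  finally show ?thesis .
qed

definition splitf :: "('e \<Rightarrow> nat \<times> 'o) \<Rightarrow> ('e,'o) state" where
  "splitf z = (fst \<circ> z, snd \<circ> z)"

definition Zpmf :: "'e set \<Rightarrow> nat \<Rightarrow> ('e \<Rightarrow> 'o pmf) \<Rightarrow> ('e \<Rightarrow> nat \<times> 'o) pmf" where
  "Zpmf E k \<mu> = Pi_pmf E (0, undefined) (\<lambda>e. pair_pmf (pmf_of_set {..<k}) (\<mu> e))"

lemma joint_eq:
  fixes E :: "'e set" and \<mu> :: "'e \<Rightarrow> 'o pmf"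
  assumes fin: "finite E"
  shows "joint_pmf E k \<mu> = map_pmf splitf (Zpmf E k \<mu>)"
proof (rule pmf_eqI)
  fix \<omega> :: "('e \<Rightarrow> nat) \<times> ('e \<Rightarrow> 'o)"
  obtain \<sigma> V where om: "\<omega> = (\<sigma>, V)" by (cases \<omega>)
  have inj: "inj (splitf :: ('e \<Rightarrow> nat \<times> 'o) \<Rightarrow> _)"
    unfolding splitf_def by (rule injI) (auto simp: fun_eq_iff prod_eq_iff)
  have sp: "(\<sigma>, V) = splitf (\<lambda>e. (\<sigma> e, V e))" by (simp add: splitf_def o_def)
  have "pmf (map_pmf splitf (Zpmf E k \<mu>)) (\<sigma>, V) = pmf (Zpmf E k \<mu>) (\<lambda>e. (\<sigma> e, V e))"
    by (subst sp) (rule pmf_map_inj'[OF inj])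
  also have "\<dots> = (if \<forall>e. e \<notin> E \<longrightarrow> (\<sigma> e, V e) = (0, undefined)
       then \<Prod>e\<in>E. pmf (pair_pmf (pmf_of_set {..<k}) (\<mu> e)) (\<sigma> e, V e) else 0)"
    unfolding Zpmf_def by (rule pmf_Pi[OF fin])
  also have "\<dots> = pmf (joint_pmf E k \<mu>) (\<sigma>, V)"
    unfolding joint_pmf_def pmf_pair pmf_Pi[OF fin] by (auto simp: prod.distrib)
  finally show "pmf (joint_pmf E k \<mu>) \<omega> = pmf (map_pmf splitf (Zpmf E k \<mu>)) \<omega>" using om by simp
qed

lemma finite_set_Pi_pmf:
  assumes "finite E" "\<And>e. e \<in> E \<Longrightarrow> finite (set_pmf (\<nu> e))"
  shows "finite (set_pmf (Pi_pmf E d \<nu>))"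
proof -
  have "set_pmf (Pi_pmf E d \<nu>) = PiE_dflt E d (set_pmf \<circ> \<nu>)" by (rule set_Pi_pmf[OF assms(1)])
  moreover have "finite (PiE_dflt E d (set_pmf \<circ> \<nu>))"
    by (rule finite_PiE_dflt) (use assms in auto)
  ultimately show ?thesis by simp
qed

lemma exp_insert_prod:
  fixes D :: "'a \<Rightarrow> real" and G :: "'e \<Rightarrow> 'a \<Rightarrow> 'a \<Rightarrow> real"
  assumes fin: "finite E" and eE: "e \<in> E"
    and fs: "\<And>e. e \<in> E \<Longrightarrow> finite (set_pmf (\<nu> e))"
    and Gnn: "\<And>e' y w. G e' y w \<ge> 0"
  shows "measure_pmf.expectation (Pi_pmf E d \<nu>) (\<lambda>z. D (z e) * (\<Prod>e'\<in>E-{e}. G e' (z e) (z e'))) =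
         measure_pmf.expectation (\<nu> e) (\<lambda>y. D y * (\<Prod>e'\<in>E-{e}. measure_pmf.expectation (\<nu> e') (\<lambda>w. G e' y w)))"
proof -
  let ?R = "E - {e}"
  have Eeq: "insert e ?R = E" using eE by auto
  have finR: "finite ?R" using fin by auto
  have "Pi_pmf (insert e ?R) d \<nu> = map_pmf (\<lambda>(y,f). f(e:=y)) (pair_pmf (\<nu> e) (Pi_pmf ?R d \<nu>))"
    by (rule Pi_pmf_insert[OF finR]) simp
  then have Pi_eq: "Pi_pmf E d \<nu> = map_pmf (\<lambda>(y,f). f(e:=y)) (pair_pmf (\<nu> e) (Pi_pmf ?R d \<nu>))"
    by (simp only: Eeq)
  have fse: "finite (set_pmf (\<nu> e))" using fs eE .
  have fsR: "finite (set_pmf (Pi_pmf ?R d \<nu>))" by (rule finite_set_Pi_pmf) (use fin fs in auto)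
  have "measure_pmf.expectation (Pi_pmf E d \<nu>) (\<lambda>z. D (z e) * (\<Prod>e'\<in>?R. G e' (z e) (z e'))) =
        measure_pmf.expectation (pair_pmf (\<nu> e) (Pi_pmf ?R d \<nu>))
          (\<lambda>yf. D (fst yf) * (\<Prod>e'\<in>?R. G e' (fst yf) (snd yf e')))"
  proof -
    have pt: "D (((snd yf)(e := fst yf)) e) * (\<Prod>e'\<in>?R. G e' (((snd yf)(e := fst yf)) e) (((snd yf)(e := fst yf)) e'))
        = D (fst yf) * (\<Prod>e'\<in>?R. G e' (fst yf) (snd yf e'))" for yf :: "'a \<times> ('e \<Rightarrow> 'a)"
    proof -
      have "(\<Prod>e'\<in>?R. G e' (fst yf) (((snd yf)(e := fst yf)) e')) = (\<Prod>e'\<in>?R. G e' (fst yf) (snd yf e'))"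
        by (rule prod.cong) auto
      then show ?thesis by simp
    qed
    show ?thesis
      unfolding Pi_eq integral_map_pmf
      by (rule Bochner_Integration.integral_cong[OF refl]) (simp add: case_prod_beta pt)
  qed
  also have "\<dots> = measure_pmf.expectation (\<nu> e) (\<lambda>y. measure_pmf.expectation (Pi_pmf ?R d \<nu>)
                    (\<lambda>f. D y * (\<Prod>e'\<in>?R. G e' y (f e'))))"
    by (subst exp_pair_iter[OF fse fsR]) simp
  also have "\<dots> = measure_pmf.expectation (\<nu> e) (\<lambda>y. D y * (\<Prod>e'\<in>?R. measure_pmf.expectation (\<nu> e') (\<lambda>w. G e' y w)))"
  proof (rule Bochner_Integration.integral_cong[OF refl])
    fix y
    have "measure_pmf.expectation (Pi_pmf ?R d \<nu>) (\<lambda>f. D y * (\<Prod>e'\<in>?R. G e' y (f e'))) =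
          D y * measure_pmf.expectation (Pi_pmf ?R d \<nu>) (\<lambda>f. \<Prod>e'\<in>?R. G e' y (f e'))"
      by (rule Bochner_Integration.integral_mult_right_zero)
    also have "measure_pmf.expectation (Pi_pmf ?R d \<nu>) (\<lambda>f. \<Prod>e'\<in>?R. G e' y (f e')) =
               (\<Prod>e'\<in>?R. measure_pmf.expectation (\<nu> e') (\<lambda>w. G e' y w))"
      by (rule expectation_prod_Pi_pmf[OF finR]) (use fs Gnn in \<open>auto intro!: integrable_measure_pmf_finite\<close>)
    finally show "measure_pmf.expectation (Pi_pmf ?R d \<nu>) (\<lambda>f. D y * (\<Prod>e'\<in>?R. G e' y (f e'))) =
        D y * (\<Prod>e'\<in>?R. measure_pmf.expectation (\<nu> e') (\<lambda>w. G e' y w))" .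
  qed
  finally show ?thesis .
qed

abbreviation ind :: "bool \<Rightarrow> real" where "ind P \<equiv> (if P then 1 else 0)"

lemma exp_const_pmf: "measure_pmf.expectation M (\<lambda>_. c) = (c::real)"
  by simp

lemma exp_ind_bounds:
  fixes M :: "'a pmf"
  shows "0 \<le> measure_pmf.expectation M (\<lambda>w. ind (P w))" "measure_pmf.expectation M (\<lambda>w. ind (P w)) \<le> 1"
proof -
  show "0 \<le> measure_pmf.expectation M (\<lambda>w. ind (P w))" by (rule Bochner_Integration.integral_nonneg) auto
  have "measure_pmf.expectation M (\<lambda>w. ind (P w)) \<le> measure_pmf.expectation M (\<lambda>_. 1)"
    by (rule integral_mono) (auto intro!: measure_pmf.integrable_const_bound[where B=1])
  then show "measure_pmf.expectation M (\<lambda>w. ind (P w)) \<le> 1" by simp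
qed

lemma exp_pair_prod:
  fixes f :: "'a \<Rightarrow> real" and g :: "'b \<Rightarrow> real"
  assumes fA: "finite (set_pmf A)" and fB: "finite (set_pmf B)"
  shows "measure_pmf.expectation (pair_pmf A B) (\<lambda>y. f (fst y) * g (snd y)) =
         measure_pmf.expectation A f * measure_pmf.expectation B g"
proof -
  have "measure_pmf.expectation (pair_pmf A B) (\<lambda>y. f (fst y) * g (snd y)) =
        measure_pmf.expectation A (\<lambda>a. measure_pmf.expectation B (\<lambda>b. f a * g b))"
    by (subst exp_pair_iter[OF fA fB]) simp
  also have "\<dots> = measure_pmf.expectation A (\<lambda>a. f a * measure_pmf.expectation B g)"
    by simp
  also have "\<dots> = measure_pmf.expectation A f * measure_pmf.expectation B g"
    by simp
  finally show ?thesis .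
qed

lemma set_U: "0 < (k::nat) \<Longrightarrow> set_pmf (pmf_of_set {..<k}) = {..<k}"
  by (intro set_pmf_of_set) auto

lemma exp_unif_ind:
  assumes "i < k"
  shows "measure_pmf.expectation (pmf_of_set {..<k}) (\<lambda>s. ind (s = i)) = 1 / real k"
proof -
  have "measure_pmf.expectation (pmf_of_set {..<k}) (\<lambda>s. ind (s = i)) =
        (\<Sum>s\<in>{..<k}. ind (s = i) * pmf (pmf_of_set {..<k}) s)"
    by (rule integral_measure_pmf_real) (use assms set_U[of k] in auto)
  also have "\<dots> = (\<Sum>s\<in>{i}. ind (s = i) * pmf (pmf_of_set {..<k}) s)"
    by (rule sum.mono_neutral_right) (use assms in auto)
  also have "\<dots> = 1 / real k"
  proof -
    have ne: "{..<k} \<noteq> {}" using assms by auto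
    show ?thesis using assms pmf_of_set[OF ne finite_lessThan, of i] by simp
  qed
  finally show ?thesis .
qed

lemma factor_ineq:
  fixes B A :: "'o \<Rightarrow> bool" and M :: "'o pmf"
  assumes k: "i < k" and fM: "finite (set_pmf M)" and BA: "\<And>w. \<not> B w \<Longrightarrow> A w"
  shows "(1 - measure_pmf.expectation M (\<lambda>w. ind (A w)) / real k) *
           measure_pmf.expectation (pair_pmf (pmf_of_set {..<k}) M) (\<lambda>y. ind (B (snd y)))
         \<le> measure_pmf.expectation (pair_pmf (pmf_of_set {..<k}) M)
              (\<lambda>y. ind (B (snd y) \<and> \<not> (A (snd y) \<and> fst y = i)))"
proof -
  let ?U = "pmf_of_set {..<k} :: nat pmf"
  let ?P = "pair_pmf ?U M"
  have fU: "finite (set_pmf ?U)" using k set_U[of k] by simp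
  have fP: "finite (set_pmf ?P)" using fU fM by simp
  define q where "q = measure_pmf.expectation M (\<lambda>w. ind (A w))"
  define \<beta> where "\<beta> = measure_pmf.expectation M (\<lambda>w. ind (B w))"
  define \<gamma> where "\<gamma> = measure_pmf.expectation M (\<lambda>w. ind (A w \<and> B w))"
  have b1: "\<beta> = measure_pmf.expectation ?P (\<lambda>y. ind (B (snd y)))"
    unfolding \<beta>_def by (rule expectation_pair_pmf_snd[symmetric])
  have "measure_pmf.expectation ?P (\<lambda>y. ind (B (snd y) \<and> \<not> (A (snd y) \<and> fst y = i))) =
        measure_pmf.expectation ?P (\<lambda>y. ind (B (snd y)) - ind (fst y = i) * ind (A (snd y) \<and> B (snd y)))"
    by (rule Bochner_Integration.integral_cong) auto
  also have "\<dots> = measure_pmf.expectation ?P (\<lambda>y. ind (B (snd y))) -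
                  measure_pmf.expectation ?P (\<lambda>y. ind (fst y = i) * ind (A (snd y) \<and> B (snd y)))"
    by (rule Bochner_Integration.integral_diff) (use fP in \<open>auto intro: integrable_measure_pmf_finite\<close>)
  also have "measure_pmf.expectation ?P (\<lambda>y. ind (fst y = i) * ind (A (snd y) \<and> B (snd y))) =
             (1 / real k) * \<gamma>"
    unfolding \<gamma>_def using exp_pair_prod[OF fU fM, of "\<lambda>s. ind (s = i)" "\<lambda>w. ind (A w \<and> B w)"]
      exp_unif_ind[OF k] by simp
  finally have L: "measure_pmf.expectation ?P (\<lambda>y. ind (B (snd y) \<and> \<not> (A (snd y) \<and> fst y = i)))
      = \<beta> - \<gamma> / real k" using b1 by simp
  have "\<gamma> = measure_pmf.expectation M (\<lambda>w. ind (A w) - (1 - ind (B w)))"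
    unfolding \<gamma>_def by (rule Bochner_Integration.integral_cong) (use BA in auto)
  also have "\<dots> = q - (1 - \<beta>)"
    unfolding q_def \<beta>_def
    by (subst Bochner_Integration.integral_diff; (subst Bochner_Integration.integral_diff)?)
       (use fM in \<open>auto intro: integrable_measure_pmf_finite\<close>)
  finally have g: "\<gamma> = q - (1 - \<beta>)" .
  have q1: "q \<le> 1" and b0: "\<beta> \<le> 1" unfolding q_def \<beta>_def by (rule exp_ind_bounds)+
  have kpos: "real k > 0" using k by simp
  have "(1 - q / real k) * \<beta> \<le> \<beta> - \<gamma> / real k"
  proof -
    have "\<beta> - \<gamma> / real k - (1 - q / real k) * \<beta> = (1 - q) * (1 - \<beta>) / real k"
      using kpos unfolding g by (simp add: field_simps)
    also have "\<dots> \<ge> 0" using q1 b0 kpos by (intro divide_nonneg_pos mult_nonneg_nonneg) auto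
    finally show ?thesis by simp
  qed
  then show ?thesis using L b1 unfolding q_def by simp
qed


lemma prod_ind:
  assumes "finite S"
  shows "(\<Prod>e\<in>S. ind (P e)) = ind (\<forall>e\<in>S. P e)"
proof (cases "\<forall>e\<in>S. P e")
  case True
  then show ?thesis by simp
next
  case False
  then obtain e where "e \<in> S" "\<not> P e" by blast
  then have "(\<Prod>e\<in>S. ind (P e)) = 0" using prod_zero_iff[OF assms, of "\<lambda>e. ind (P e)"] by auto
  then show ?thesis using False by simp
qed

definition qf :: "('e \<Rightarrow> 'o pmf) \<Rightarrow> ('e \<Rightarrow> 'o \<Rightarrow> bool) \<Rightarrow> 'e \<Rightarrow> real" where
  "qf \<mu> acc e = measure_pmf.expectation (\<mu> e) (\<lambda>w. ind (acc e w))"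

lemma qf_bounds: "0 \<le> qf \<mu> acc e" "qf \<mu> acc e \<le> 1"
  unfolding qf_def by (rule exp_ind_bounds)+

lemma step4:
  fixes E :: "'e set" and \<mu> :: "'e \<Rightarrow> 'o pmf" and acc :: "'e \<Rightarrow> 'o \<Rightarrow> bool"
  assumes fin: "finite E" and eE: "e \<in> E" and kpos: "k > 0"
    and fs: "\<forall>e\<in>E. finite (set_pmf (\<mu> e))"
    and accgt: "\<And>e v. x e v > \<tau> \<Longrightarrow> acc e v"
  shows "(\<Prod>e'\<in>E. 1 - qf \<mu> acc e' / real k) *
           measure_pmf.expectation (joint_pmf E k \<mu>) (\<lambda>\<omega>. hh E x rk \<tau> \<omega> e)
         \<le> measure_pmf.expectation (joint_pmf E k \<mu>) (\<lambda>\<omega>. hl E x rk acc \<tau> \<omega> e)"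
proof -
  let ?U = "pmf_of_set {..<k} :: nat pmf"
  define \<nu> where "\<nu> = (\<lambda>e. pair_pmf ?U (\<mu> e))"
  let ?R = "E - {e}"
  let ?c = "\<Prod>e'\<in>E. 1 - qf \<mu> acc e' / real k"
  have Zeq: "Zpmf E k \<mu> = Pi_pmf E (0, undefined) \<nu>" unfolding Zpmf_def \<nu>_def ..
  have setU: "set_pmf ?U = {..<k}" using set_U[OF kpos] .
  have fsn: "finite (set_pmf (\<nu> e'))" if "e' \<in> E" for e'
    unfolding \<nu>_def using fs that setU by simp
  define D where "D = (\<lambda>y::nat \<times> 'o. if \<tau> < x e (snd y) then x e (snd y) - \<tau> else 0)"
  define Gl where "Gl = (\<lambda>e' (y::nat \<times> 'o) (w::nat \<times> 'o).
      ind (below x rk e' (snd w) e (snd y) \<and> \<not> (acc e' (snd w) \<and> fst w = fst y)))"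
  define Gb where "Gb = (\<lambda>e' (y::nat \<times> 'o) (w::nat \<times> 'o). ind (below x rk e' (snd w) e (snd y)))"
  have finR: "finite ?R" using fin by simp
  have Glnn: "\<And>e' y w. 0 \<le> Gl e' y w" unfolding Gl_def by simp
  have Gbnn0: "\<And>e' y w. 0 \<le> Gb e' y w" unfolding Gb_def by simp
  have hl_eq: "hl E x rk acc \<tau> (splitf z) e = D (z e) * (\<Prod>e'\<in>?R. Gl e' (z e) (z e'))" for z
    unfolding Gl_def prod_ind[OF finR] unfolding hl_def splitf_def D_def by simp
  have hh_eq: "hh E x rk \<tau> (splitf z) e = D (z e) * (\<Prod>e'\<in>?R. Gb e' (z e) (z e'))" for z
    unfolding Gb_def prod_ind[OF finR] unfolding hh_def splitf_def D_def by simp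
  have El: "measure_pmf.expectation (joint_pmf E k \<mu>) (\<lambda>\<omega>. hl E x rk acc \<tau> \<omega> e) =
     measure_pmf.expectation (\<nu> e) (\<lambda>y. D y * (\<Prod>e'\<in>?R. measure_pmf.expectation (\<nu> e') (\<lambda>w. Gl e' y w)))"
    unfolding joint_eq[OF fin] integral_map_pmf hl_eq Zeq
    by (rule exp_insert_prod[OF fin eE fsn Glnn, where D=D])
  have Eb: "measure_pmf.expectation (joint_pmf E k \<mu>) (\<lambda>\<omega>. hh E x rk \<tau> \<omega> e) =
     measure_pmf.expectation (\<nu> e) (\<lambda>y. D y * (\<Prod>e'\<in>?R. measure_pmf.expectation (\<nu> e') (\<lambda>w. Gb e' y w)))"
    unfolding joint_eq[OF fin] integral_map_pmf hh_eq Zeq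
    by (rule exp_insert_prod[OF fin eE fsn Gbnn0, where D=D])
  have qb: "0 \<le> 1 - qf \<mu> acc e' / real k" "1 - qf \<mu> acc e' / real k \<le> 1" for e'
  proof -
    have "qf \<mu> acc e' / real k \<le> 1" using qf_bounds[of \<mu> acc e'] kpos
      by (simp add: divide_le_eq_1)
    then show "0 \<le> 1 - qf \<mu> acc e' / real k" by simp
    show "1 - qf \<mu> acc e' / real k \<le> 1" using qf_bounds[of \<mu> acc e'] kpos by simp
  qed
  have cR: "?c \<le> (\<Prod>e'\<in>?R. 1 - qf \<mu> acc e' / real k)"
  proof -
    have eq: "?c = (1 - qf \<mu> acc e / real k) * (\<Prod>e'\<in>?R. 1 - qf \<mu> acc e' / real k)"
      using prod.remove[OF fin eE, of "\<lambda>e'. 1 - qf \<mu> acc e' / real k"] by simp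
    have Pnn: "0 \<le> (\<Prod>e'\<in>?R. 1 - qf \<mu> acc e' / real k)"
      by (rule prod_nonneg) (rule qb(1))
    have le: "(1 - qf \<mu> acc e / real k) * (\<Prod>e'\<in>?R. 1 - qf \<mu> acc e' / real k)
        \<le> (\<Prod>e'\<in>?R. 1 - qf \<mu> acc e' / real k)"
      by (rule mult_left_le_one_le[OF Pnn qb(1)[of e] qb(2)[of e]])
    show ?thesis unfolding eq by (rule le)
  qed
  have pw: "?c * (D y * (\<Prod>e'\<in>?R. measure_pmf.expectation (\<nu> e') (\<lambda>w. Gb e' y w)))
          \<le> D y * (\<Prod>e'\<in>?R. measure_pmf.expectation (\<nu> e') (\<lambda>w. Gl e' y w))"
    if y: "y \<in> set_pmf (\<nu> e)" for y
  proof (cases "\<tau> < x e (snd y)")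
    case False
    then show ?thesis unfolding D_def by simp
  next
    case True
    have "y \<in> set_pmf ?U \<times> set_pmf (\<mu> e)" using y unfolding \<nu>_def set_pair_pmf .
    then have "fst y \<in> set_pmf ?U" by (rule mem_Times_iff[THEN iffD1, THEN conjunct1])
    then have fy: "fst y < k" unfolding setU by simp
    have Dnn: "D y \<ge> 0" unfolding D_def by simp
    have fac: "(1 - qf \<mu> acc e' / real k) * measure_pmf.expectation (\<nu> e') (\<lambda>w. Gb e' y w)
               \<le> measure_pmf.expectation (\<nu> e') (\<lambda>w. Gl e' y w)" if e': "e' \<in> ?R" for e'
    proof -
      have BA: "acc e' w" if "\<not> below x rk e' w e (snd y)" for w
      proof -
        have "x e' w \<ge> x e (snd y)" using that unfolding below_def by auto
        then have "\<tau> < x e' w" using True by linarith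
        then show ?thesis by (rule accgt)
      qed
      have fm: "finite (set_pmf (\<mu> e'))" using fs e' by auto
      have F: "(1 - measure_pmf.expectation (\<mu> e') (\<lambda>w. ind (acc e' w)) / real k) *
           measure_pmf.expectation (pair_pmf (pmf_of_set {..<k}) (\<mu> e')) (\<lambda>w. ind (below x rk e' (snd w) e (snd y)))
         \<le> measure_pmf.expectation (pair_pmf (pmf_of_set {..<k}) (\<mu> e'))
              (\<lambda>w. ind (below x rk e' (snd w) e (snd y) \<and> \<not> (acc e' (snd w) \<and> fst w = fst y)))"
        by (rule factor_ineq[OF fy fm, of "\<lambda>w. below x rk e' w e (snd y)" "acc e'", OF BA])
      show ?thesis
        unfolding \<nu>_def Gb_def Gl_def qf_def by (rule F)
    qed
    have Gbnn: "0 \<le> measure_pmf.expectation (\<nu> e') (\<lambda>w. Gb e' y w)" for e'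
      unfolding Gb_def by (rule exp_ind_bounds)
    have "(\<Prod>e'\<in>?R. (1 - qf \<mu> acc e' / real k) * measure_pmf.expectation (\<nu> e') (\<lambda>w. Gb e' y w))
          \<le> (\<Prod>e'\<in>?R. measure_pmf.expectation (\<nu> e') (\<lambda>w. Gl e' y w))"
    proof (rule prod_mono)
      fix e' assume e': "e' \<in> ?R"
      show "0 \<le> (1 - qf \<mu> acc e' / real k) * measure_pmf.expectation (\<nu> e') (\<lambda>w. Gb e' y w) \<and>
          (1 - qf \<mu> acc e' / real k) * measure_pmf.expectation (\<nu> e') (\<lambda>w. Gb e' y w)
          \<le> measure_pmf.expectation (\<nu> e') (\<lambda>w. Gl e' y w)"
        using fac[OF e'] mult_nonneg_nonneg[OF qb(1)[of e'] Gbnn[of e']] by (rule conjI[rotated])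
    qed
    then have "(\<Prod>e'\<in>?R. 1 - qf \<mu> acc e' / real k) * (\<Prod>e'\<in>?R. measure_pmf.expectation (\<nu> e') (\<lambda>w. Gb e' y w))
          \<le> (\<Prod>e'\<in>?R. measure_pmf.expectation (\<nu> e') (\<lambda>w. Gl e' y w))"
      by (simp add: prod.distrib)
    moreover have "?c * (\<Prod>e'\<in>?R. measure_pmf.expectation (\<nu> e') (\<lambda>w. Gb e' y w)) \<le>
       (\<Prod>e'\<in>?R. 1 - qf \<mu> acc e' / real k) * (\<Prod>e'\<in>?R. measure_pmf.expectation (\<nu> e') (\<lambda>w. Gb e' y w))"
      by (rule mult_right_mono[OF cR prod_nonneg]) (rule Gbnn)
    ultimately have "?c * (\<Prod>e'\<in>?R. measure_pmf.expectation (\<nu> e') (\<lambda>w. Gb e' y w))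
        \<le> (\<Prod>e'\<in>?R. measure_pmf.expectation (\<nu> e') (\<lambda>w. Gl e' y w))" by linarith
    then have "D y * (?c * (\<Prod>e'\<in>?R. measure_pmf.expectation (\<nu> e') (\<lambda>w. Gb e' y w)))
        \<le> D y * (\<Prod>e'\<in>?R. measure_pmf.expectation (\<nu> e') (\<lambda>w. Gl e' y w))"
      by (rule mult_left_mono[OF _ Dnn])
    moreover have "?c * (D y * (\<Prod>e'\<in>?R. measure_pmf.expectation (\<nu> e') (\<lambda>w. Gb e' y w)))
       = D y * (?c * (\<Prod>e'\<in>?R. measure_pmf.expectation (\<nu> e') (\<lambda>w. Gb e' y w)))"
      by (rule mult.left_commute)
    ultimately show ?thesis by linarith
  qed
  have "?c * measure_pmf.expectation (joint_pmf E k \<mu>) (\<lambda>\<omega>. hh E x rk \<tau> \<omega> e) =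
        measure_pmf.expectation (\<nu> e) (\<lambda>y. ?c * (D y * (\<Prod>e'\<in>?R. measure_pmf.expectation (\<nu> e') (\<lambda>w. Gb e' y w))))"
    unfolding Eb by simp
  also have "\<dots> \<le> measure_pmf.expectation (\<nu> e) (\<lambda>y. D y * (\<Prod>e'\<in>?R. measure_pmf.expectation (\<nu> e') (\<lambda>w. Gl e' y w)))"
    by (rule integral_mono_AE) (use fsn[OF eE] pw in \<open>auto intro: integrable_measure_pmf_finite simp: AE_measure_pmf_iff\<close>)
  also have "\<dots> = measure_pmf.expectation (joint_pmf E k \<mu>) (\<lambda>\<omega>. hl E x rk acc \<tau> \<omega> e)"
    using El by simp
  finally show ?thesis .
qed

lemma affine_max:
  fixes A B t a b :: real
  assumes "b \<le> t" "t \<le> a"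
  shows "A + B * t \<le> A + B * a \<or> A + B * t \<le> A + B * b"
proof (cases "B \<ge> 0")
  case True
  then have "B * t \<le> B * a" using assms by (intro mult_left_mono) auto
  then show ?thesis by simp
next
  case False
  then have "B * t \<le> B * b" using assms by (intro mult_left_mono_neg) auto
  then show ?thesis by simp
qed

lemma vertex:
  fixes a b q :: "'e \<Rightarrow> real" and K :: real
  assumes "finite S" "\<forall>e\<in>S. b e \<le> q e \<and> q e \<le> a e"
  shows "\<exists>W\<subseteq>S. \<alpha> + \<beta> * (\<Prod>e\<in>S. 1 - q e) + \<gamma> * (\<Prod>e\<in>S. 1 - q e / K) \<le>
     \<alpha> + \<beta> * (\<Prod>e\<in>S. 1 - (if e \<in> W then a e else b e)) + \<gamma> * (\<Prod>e\<in>S. 1 - (if e \<in> W then a e else b e) / K)"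
  using assms
proof (induction S arbitrary: \<alpha> \<beta> \<gamma> rule: finite_induct)
  case empty
  then show ?case by auto
next
  case (insert e S)
  let ?Q = "\<Prod>e\<in>S. 1 - q e"
  let ?P = "\<Prod>e\<in>S. 1 - q e / K"
  define f where "f = (\<lambda>t. \<alpha> + \<beta> * (1 - t) * ?Q + \<gamma> * (1 - t / K) * ?P)"
  have flin: "f t = (\<alpha> + \<beta> * ?Q + \<gamma> * ?P) + (- \<beta> * ?Q - \<gamma> * ?P / K) * t" for t
    unfolding f_def by (simp add: algebra_simps diff_divide_distrib)
  have bq: "b e \<le> q e" "q e \<le> a e" using insert.prems by auto
  have "f (q e) \<le> f (a e) \<or> f (q e) \<le> f (b e)"
    unfolding flin by (rule affine_max[OF bq])
  then obtain c where c: "c = a e \<or> c = b e" and fc: "f (q e) \<le> f c"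
    by blast
  have Sb: "\<forall>e\<in>S. b e \<le> q e \<and> q e \<le> a e" using insert.prems by auto
  obtain W where W: "W \<subseteq> S" and IH:
    "\<alpha> + (\<beta> * (1 - c)) * ?Q + (\<gamma> * (1 - c / K)) * ?P \<le>
     \<alpha> + (\<beta> * (1 - c)) * (\<Prod>e\<in>S. 1 - (if e \<in> W then a e else b e))
        + (\<gamma> * (1 - c / K)) * (\<Prod>e\<in>S. 1 - (if e \<in> W then a e else b e) / K)"
    using insert.IH[of "\<alpha>" "\<beta> * (1 - c)" "\<gamma> * (1 - c / K)", OF Sb] by (elim exE conjE) (rule that)
  define W' where "W' = (if c = a e then insert e W else W)"
  have W'S: "W' \<subseteq> insert e S" unfolding W'_def using W by auto
  have ce: "(if e \<in> W' then a e else b e) = c"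
    unfolding W'_def using c W insert.hyps(2) by auto
  have same: "(if e' \<in> W' then a e' else b e') = (if e' \<in> W then a e' else b e')" if "e' \<in> S" for e'
    unfolding W'_def using that insert.hyps(2) by auto
  have p1: "(\<Prod>e'\<in>insert e S. 1 - (if e' \<in> W' then a e' else b e')) =
        (1 - c) * (\<Prod>e\<in>S. 1 - (if e \<in> W then a e else b e))"
    using insert.hyps ce same by (simp add: prod.insert)
  have p2: "(\<Prod>e'\<in>insert e S. 1 - (if e' \<in> W' then a e' else b e') / K) =
        (1 - c / K) * (\<Prod>e\<in>S. 1 - (if e \<in> W then a e else b e) / K)"
    using insert.hyps ce same by (simp add: prod.insert)
  have "\<alpha> + \<beta> * (\<Prod>e\<in>insert e S. 1 - q e) + \<gamma> * (\<Prod>e\<in>insert e S. 1 - q e / K) = f (q e)"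
    unfolding f_def using insert.hyps by (simp add: algebra_simps)
  also have "\<dots> \<le> f c" by (rule fc)
  also have "f c = \<alpha> + (\<beta> * (1 - c)) * ?Q + (\<gamma> * (1 - c / K)) * ?P"
    unfolding f_def by (simp add: algebra_simps)
  also note IH
  also have "\<alpha> + (\<beta> * (1 - c)) * (\<Prod>e\<in>S. 1 - (if e \<in> W then a e else b e))
        + (\<gamma> * (1 - c / K)) * (\<Prod>e\<in>S. 1 - (if e \<in> W then a e else b e) / K) =
     \<alpha> + \<beta> * (\<Prod>e'\<in>insert e S. 1 - (if e' \<in> W' then a e' else b e'))
        + \<gamma> * (\<Prod>e'\<in>insert e S. 1 - (if e' \<in> W' then a e' else b e') / K)"
    unfolding p1 p2 by (simp add: algebra_simps)
  finally show ?case using W'S by blast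
qed


lemma bern_k:
  fixes q :: real and k :: nat
  assumes "k > 0" "0 \<le> q" "q \<le> 1"
  shows "1 - q \<le> (1 - q / real k) ^ k"
proof -
  have "-1 \<le> - q / real k" using assms by (simp add: field_simps)
  then have "1 + real k * (- q / real k) \<le> (1 + (- q / real k)) ^ k"
    by (rule Bernoulli_inequality)
  then show ?thesis using assms by simp
qed

lemma choose_W:
  fixes a b :: "'e \<Rightarrow> real" and k :: nat and p \<tau> M :: real
  assumes fin: "finite S" and kpos: "k > 0" and ppos: "p > 0" and peq: "p ^ k + p - 1 = 0"
    and tau: "\<tau> \<ge> 0" and Mnn: "M \<ge> 0"
    and ab: "\<forall>e\<in>S. 0 \<le> b e \<and> b e \<le> a e \<and> a e \<le> 1"
    and ha: "(\<Prod>e\<in>S. 1 - a e) \<le> 1 - p" and hb: "1 - p \<le> (\<Prod>e\<in>S. 1 - b e)"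
  shows "\<exists>W\<subseteq>S. p * (\<tau> + M) \<le> \<tau> * (1 - (\<Prod>e\<in>S. 1 - (if e \<in> W then a e else b e)))
            + (\<Prod>e\<in>S. 1 - (if e \<in> W then a e else b e) / real k) * M"
proof -
  define h where "h = (\<lambda>l::real. \<Prod>e\<in>S. 1 - (b e + l * (a e - b e)))"
  have h0: "h 0 = (\<Prod>e\<in>S. 1 - b e)" unfolding h_def by simp
  have h1: "h 1 = (\<Prod>e\<in>S. 1 - a e)" unfolding h_def by simp
  have cont: "\<forall>l. 0 \<le> l \<and> l \<le> 1 \<longrightarrow> isCont h l"
    unfolding h_def by (intro allI impI continuous_intros)
  obtain l where l: "0 \<le> l" "l \<le> 1" "h l = 1 - p"
    using IVT2[of h 1 "1 - p" 0, OF _ _ _ cont] ha hb h0 h1 by auto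
  define q where "q = (\<lambda>e. b e + l * (a e - b e))"
  have qb: "b e \<le> q e \<and> q e \<le> a e" if "e \<in> S" for e
  proof -
    have d: "0 \<le> a e - b e" using ab that by auto
    have "l * (a e - b e) \<le> 1 * (a e - b e)" using l d by (intro mult_right_mono) auto
    moreover have "0 \<le> l * (a e - b e)" using l d by simp
    ultimately show ?thesis unfolding q_def by simp
  qed
  have q01: "0 \<le> q e \<and> q e \<le> 1" if "e \<in> S" for e using qb[OF that] ab that by force
  have Qeq: "(\<Prod>e\<in>S. 1 - q e) = 1 - p" using l(3) unfolding h_def q_def by simp
  define X where "X = (\<Prod>e\<in>S. 1 - q e / real k)"
  have Xnn: "X \<ge> 0" unfolding X_def
  proof (rule prod_nonneg)
    fix e assume "e \<in> S"
    then have qe: "q e \<le> 1" using q01 by blast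
    have "1 \<le> real k" using kpos by simp
    then have "q e \<le> real k" using qe by linarith
    then have "q e / real k \<le> 1" using kpos by (simp add: divide_le_eq_1)
    then show "0 \<le> 1 - q e / real k" by simp
  qed
  have "p ^ k = 1 - p" using peq by simp
  also have "\<dots> = (\<Prod>e\<in>S. 1 - q e)" using Qeq by simp
  also have "\<dots> \<le> (\<Prod>e\<in>S. (1 - q e / real k) ^ k)"
  proof (rule prod_mono)
    fix e assume "e \<in> S"
    then show "0 \<le> 1 - q e \<and> 1 - q e \<le> (1 - q e / real k) ^ k"
      using q01 bern_k[OF kpos] by auto
  qed
  also have "\<dots> = X ^ k" unfolding X_def by (rule prod_power_distrib[symmetric])
  finally have pk: "p ^ k \<le> X ^ k" .
  have pX: "p \<le> X"
  proof -
    obtain n where n: "k = Suc n" using kpos by (cases k) auto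
    show ?thesis using power_le_imp_le_base[of p n X] pk Xnn unfolding n by simp
  qed
  have Sb: "\<forall>e\<in>S. b e \<le> q e \<and> q e \<le> a e" using qb by blast
  obtain W where W: "W \<subseteq> S" and V:
    "\<tau> + (- \<tau>) * (\<Prod>e\<in>S. 1 - q e) + M * (\<Prod>e\<in>S. 1 - q e / real k) \<le>
     \<tau> + (- \<tau>) * (\<Prod>e\<in>S. 1 - (if e \<in> W then a e else b e)) + M * (\<Prod>e\<in>S. 1 - (if e \<in> W then a e else b e) / real k)"
    using vertex[OF fin Sb, of \<tau> "- \<tau>" M "real k"] by (elim exE conjE) (rule that)
  have "p * (\<tau> + M) \<le> \<tau> + (- \<tau>) * (\<Prod>e\<in>S. 1 - q e) + M * (\<Prod>e\<in>S. 1 - q e / real k)"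
  proof -
    have "p * M \<le> X * M" using pX Mnn by (rule mult_right_mono)
    then show ?thesis unfolding Qeq X_def[symmetric] by (simp add: algebra_simps)
  qed
  also note V
  finally show ?thesis using W by (intro exI[of _ W]) (simp add: algebra_simps)
qed

lemma exp_cong_support:
  fixes f g :: "'a \<Rightarrow> real"
  assumes fM: "finite (set_pmf M)" and eq: "\<And>w. w \<in> set_pmf M \<Longrightarrow> f w = g w"
  shows "measure_pmf.expectation M f = measure_pmf.expectation M g"
proof -
  have "measure_pmf.expectation M f = (\<Sum>w\<in>set_pmf M. f w * pmf M w)"
    by (rule integral_measure_pmf_real) (use fM in auto)
  also have "\<dots> = (\<Sum>w\<in>set_pmf M. g w * pmf M w)" by (rule sum.cong[OF refl]) (simp add: eq)
  also have "\<dots> = measure_pmf.expectation M g"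
    by (rule integral_measure_pmf_real[symmetric]) (use fM in auto)
  finally show ?thesis .
qed

lemma exp_not_ind:
  fixes M :: "'a pmf"
  assumes fM: "finite (set_pmf M)"
  shows "measure_pmf.expectation M (\<lambda>w. ind (\<not> P w)) = 1 - measure_pmf.expectation M (\<lambda>w. ind (P w))"
proof -
  have "measure_pmf.expectation M (\<lambda>w. ind (\<not> P w)) = measure_pmf.expectation M (\<lambda>w. 1 - ind (P w))"
    by (rule Bochner_Integration.integral_cong) auto
  also have "\<dots> = measure_pmf.expectation M (\<lambda>w. 1) - measure_pmf.expectation M (\<lambda>w. ind (P w))"
    by (rule Bochner_Integration.integral_diff) (use fM in \<open>auto intro: integrable_measure_pmf_finite\<close>)
  finally show ?thesis by simp
qed

lemma exp_anyacc:
  fixes E :: "'e set" and \<mu> :: "'e \<Rightarrow> 'o pmf" and acc :: "'e \<Rightarrow> 'o \<Rightarrow> bool"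
  assumes fin: "finite E" and fs: "\<forall>e\<in>E. finite (set_pmf (\<mu> e))"
  shows "measure_pmf.expectation (joint_pmf E k \<mu>) (\<lambda>\<omega>. ind (\<exists>e\<in>E. acc e (snd \<omega> e)))
         = 1 - (\<Prod>e\<in>E. 1 - qf \<mu> acc e)"
proof -
  let ?P = "Pi_pmf E undefined \<mu>"
  have fsP: "finite (set_pmf ?P)" by (rule finite_set_Pi_pmf[OF fin]) (use fs in blast)
  have "measure_pmf.expectation (joint_pmf E k \<mu>) (\<lambda>\<omega>. ind (\<exists>e\<in>E. acc e (snd \<omega> e)))
        = measure_pmf.expectation ?P (\<lambda>V. ind (\<exists>e\<in>E. acc e (V e)))"
    unfolding joint_pmf_def
    using expectation_pair_pmf_snd[of "Pi_pmf E 0 (\<lambda>_. pmf_of_set {..<k})" ?P "\<lambda>V. ind (\<exists>e\<in>E. acc e (V e))"]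
    by simp
  also have "\<dots> = measure_pmf.expectation ?P (\<lambda>V. 1 - (\<Prod>e\<in>E. ind (\<not> acc e (V e))))"
    by (rule Bochner_Integration.integral_cong[OF refl]) (simp add: prod_ind[OF fin])
  also have "\<dots> = measure_pmf.expectation ?P (\<lambda>V. 1) - measure_pmf.expectation ?P (\<lambda>V. \<Prod>e\<in>E. ind (\<not> acc e (V e)))"
    by (rule Bochner_Integration.integral_diff) (use fsP in \<open>auto intro: integrable_measure_pmf_finite\<close>)
  also have "measure_pmf.expectation ?P (\<lambda>V. \<Prod>e\<in>E. ind (\<not> acc e (V e))) =
             (\<Prod>e\<in>E. measure_pmf.expectation (\<mu> e) (\<lambda>w. ind (\<not> acc e w)))"
    by (rule expectation_prod_Pi_pmf[OF fin, where f="\<lambda>e w. ind (\<not> acc e w)"])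
       (use fs in \<open>auto intro: integrable_measure_pmf_finite\<close>)
  also have "(\<Prod>e\<in>E. measure_pmf.expectation (\<mu> e) (\<lambda>w. ind (\<not> acc e w))) = (\<Prod>e\<in>E. 1 - qf \<mu> acc e)"
  proof (rule prod.cong[OF refl])
    fix e assume "e \<in> E"
    then have "finite (set_pmf (\<mu> e))" using fs by blast
    then show "measure_pmf.expectation (\<mu> e) (\<lambda>w. ind (\<not> acc e w)) = 1 - qf \<mu> acc e"
      unfolding qf_def by (rule exp_not_ind)
  qed
  finally show ?thesis by simp
qed

lemma choose_tau:
  fixes E :: "'e set" and \<mu> :: "'e \<Rightarrow> 'o pmf" and x :: "'e \<Rightarrow> 'o \<Rightarrow> real" and p :: real
  assumes fin: "finite E" and ne: "E \<noteq> {}" and fs: "\<forall>e\<in>E. finite (set_pmf (\<mu> e))"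
    and xnn: "\<forall>e v. x e v \<ge> 0" and p1: "p < 1" and p0: "0 < p"
  shows "\<exists>\<tau>\<ge>0. (\<Prod>e\<in>E. 1 - measure_pmf.expectation (\<mu> e) (\<lambda>w. ind (\<tau> \<le> x e w))) \<le> 1 - p \<and>
              1 - p \<le> (\<Prod>e\<in>E. 1 - measure_pmf.expectation (\<mu> e) (\<lambda>w. ind (\<tau> < x e w)))"
proof -
  define Af where "Af = (\<lambda>t. \<Prod>e\<in>E. 1 - measure_pmf.expectation (\<mu> e) (\<lambda>w. ind (t \<le> x e w)))"
  define vals where "vals = insert 0 (\<Union>e\<in>E. x e ` set_pmf (\<mu> e))"
  have fvals: "finite vals" unfolding vals_def using fin fs by auto
  have inv: "x e w \<in> vals" if "e \<in> E" "w \<in> set_pmf (\<mu> e)" for e w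
    unfolding vals_def using that by blast
  define T where "T = {t \<in> vals. Af t \<le> 1 - p}"
  have fT: "finite T" unfolding T_def using fvals by simp
  have Af0: "Af 0 = 0"
  proof -
    obtain e0 where e0: "e0 \<in> E" using ne by blast
    have "measure_pmf.expectation (\<mu> e0) (\<lambda>w. ind (0 \<le> x e0 w)) = 1" using xnn by simp
    then have z: "(1::real) - measure_pmf.expectation (\<mu> e0) (\<lambda>w. ind (0 \<le> x e0 w)) = 0" by simp
    show ?thesis unfolding Af_def
      by (rule prod_zero[OF fin bexI[of "\<lambda>e. (1::real) - measure_pmf.expectation (\<mu> e) (\<lambda>w. ind (0 \<le> x e w)) = 0" e0, OF z e0]])
  qed
  have T0: "0 \<in> T" unfolding T_def vals_def using Af0 p1 by simp
  define \<tau> where "\<tau> = Max T"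
  have tauT: "\<tau> \<in> T" unfolding \<tau>_def using fT T0 by (intro Max_in) auto
  have tau0: "\<tau> \<ge> 0" unfolding \<tau>_def using fT T0 by (intro Max_ge)
  have Atau: "Af \<tau> \<le> 1 - p" using tauT unfolding T_def by simp
  have B: "1 - p \<le> (\<Prod>e\<in>E. 1 - measure_pmf.expectation (\<mu> e) (\<lambda>w. ind (\<tau> < x e w)))"
  proof (cases "\<exists>v\<in>vals. \<tau> < v")
    case True
    define t' where "t' = Min {v \<in> vals. \<tau> < v}"
    have ft: "finite {v \<in> vals. \<tau> < v}" using fvals by simp
    have t'in: "t' \<in> {v \<in> vals. \<tau> < v}" unfolding t'_def using ft True by (intro Min_in) auto
    have t'T: "t' \<notin> T"
    proof
      assume "t' \<in> T"
      then have "t' \<le> \<tau>" unfolding \<tau>_def using fT by (intro Max_ge)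
      then show False using t'in by simp
    qed
    then have At': "Af t' > 1 - p" using t'in unfolding T_def by auto
    have "Af t' = (\<Prod>e\<in>E. 1 - measure_pmf.expectation (\<mu> e) (\<lambda>w. ind (\<tau> < x e w)))"
      unfolding Af_def
    proof (rule prod.cong[OF refl])
      fix e assume eE: "e \<in> E"
      have "measure_pmf.expectation (\<mu> e) (\<lambda>w. ind (t' \<le> x e w)) =
            measure_pmf.expectation (\<mu> e) (\<lambda>w. ind (\<tau> < x e w))"
      proof (rule exp_cong_support)
        show "finite (set_pmf (\<mu> e))" using fs eE by blast
        fix w assume w: "w \<in> set_pmf (\<mu> e)"
        have xv: "x e w \<in> vals" by (rule inv[OF eE w])
        have "t' \<le> x e w \<longleftrightarrow> \<tau> < x e w"
        proof
          assume "t' \<le> x e w" then show "\<tau> < x e w" using t'in by simp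
        next
          assume "\<tau> < x e w"
          then have "x e w \<in> {v \<in> vals. \<tau> < v}" using xv by simp
          then show "t' \<le> x e w" unfolding t'_def using ft by (intro Min_le)
        qed
        then show "ind (t' \<le> x e w) = ind (\<tau> < x e w)" by simp
      qed
      then show "1 - measure_pmf.expectation (\<mu> e) (\<lambda>w. ind (t' \<le> x e w)) =
                 1 - measure_pmf.expectation (\<mu> e) (\<lambda>w. ind (\<tau> < x e w))" by simp
    qed
    then show ?thesis using At' by simp
  next
    case False
    have "(\<Prod>e\<in>E. 1 - measure_pmf.expectation (\<mu> e) (\<lambda>w. ind (\<tau> < x e w))) = (\<Prod>e\<in>E. 1)"
    proof (rule prod.cong[OF refl])
      fix e assume eE: "e \<in> E"
      have "measure_pmf.expectation (\<mu> e) (\<lambda>w. ind (\<tau> < x e w)) = measure_pmf.expectation (\<mu> e) (\<lambda>w. 0)"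
      proof (rule exp_cong_support)
        show "finite (set_pmf (\<mu> e))" using fs eE by blast
        fix w assume w: "w \<in> set_pmf (\<mu> e)"
        have "x e w \<in> vals" by (rule inv[OF eE w])
        then have "\<not> \<tau> < x e w" using False by blast
        then show "ind (\<tau> < x e w) = 0" by simp
      qed
      then show "1 - measure_pmf.expectation (\<mu> e) (\<lambda>w. ind (\<tau> < x e w)) = 1" by simp
    qed
    then show ?thesis using p0 by simp
  qed
  show ?thesis using tau0 Atau B unfolding Af_def by blast
qed

lemma finite_set_joint:
  fixes E :: "'e set" and \<mu> :: "'e \<Rightarrow> 'o pmf"
  assumes fin: "finite E" and kpos: "k > 0" and fs: "\<forall>e\<in>E. finite (set_pmf (\<mu> e))"
  shows "finite (set_pmf (joint_pmf E k \<mu>))"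
proof -
  have fz: "finite (set_pmf (Zpmf E k \<mu>))" unfolding Zpmf_def
  proof (rule finite_set_Pi_pmf[OF fin])
    fix e assume "e \<in> E"
    then have "finite (set_pmf (\<mu> e))" using fs by blast
    moreover have "set_pmf (pmf_of_set {..<k}) = {..<k}" by (rule set_U[OF kpos])
    ultimately show "finite (set_pmf (pair_pmf (pmf_of_set {..<k}) (\<mu> e)))" by simp
  qed
  show ?thesis unfolding joint_eq[OF fin] set_map_pmf by (rule finite_imageI[OF fz])
qed

theorem mainTheorem2:
  fixes E :: "'e set" and k :: nat and p :: real
    and \<mu> :: "'e \<Rightarrow> 'o pmf" and x :: "'e \<Rightarrow> 'o \<Rightarrow> real"
  assumes "finite E"
    and "k > 0"
    and "p > 0" and "p ^ k + p - 1 = 0"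
    and "\<forall>e\<in>E. finite (set_pmf (\<mu> e))"
    and "\<forall>e v. x e v \<ge> 0"
  shows "\<exists>(\<theta> :: 'e \<Rightarrow> real) (strict :: 'e \<Rightarrow> bool) (rk :: 'e \<Rightarrow> nat).
           inj_on rk E \<and>
           (\<forall>s. adversarial E k \<mu> x (threshold_acc x \<theta> strict) rk s \<longrightarrow>
              measure_pmf.expectation (joint_pmf E k \<mu>)
                (\<lambda>\<omega>. principal E k x (threshold_acc x \<theta> strict) rk \<omega> (profile_acts E s \<omega>))
              \<ge> p * measure_pmf.expectation (joint_pmf E k \<mu>) (opt E x))"
proof (cases "E = {}")
  case True
  show ?thesis
  proof (rule exI[of _ "\<lambda>_. 0"], rule exI[of _ "\<lambda>_. False"], rule exI[of _ "\<lambda>_. 0"], intro conjI allI impI)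
    show "inj_on (\<lambda>_. 0::nat) E" using True by simp
    fix s
    have o: "opt E x \<omega> = 0" for \<omega> unfolding opt_def True by simp
    have "measure_pmf.expectation (joint_pmf E k \<mu>) (opt E x) = 0" unfolding o[abs_def] by simp
    moreover have "0 \<le> measure_pmf.expectation (joint_pmf E k \<mu>)
        (\<lambda>\<omega>. principal E k x (threshold_acc x (\<lambda>_. 0) (\<lambda>_. False)) (\<lambda>_. 0) \<omega> (profile_acts E s \<omega>))"
      by (rule Bochner_Integration.integral_nonneg) (rule principal_nonneg[OF assms(6)])
    ultimately show "p * measure_pmf.expectation (joint_pmf E k \<mu>) (opt E x) \<le> measure_pmf.expectation (joint_pmf E k \<mu>)
        (\<lambda>\<omega>. principal E k x (threshold_acc x (\<lambda>_. 0) (\<lambda>_. False)) (\<lambda>_. 0) \<omega> (profile_acts E s \<omega>))"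
      by simp
  qed
next
  case False
  note fin = assms(1) and kpos = assms(2) and ppos = assms(3) and peq = assms(4)
    and fs = assms(5) and xnn = assms(6)
  obtain rk :: "'e \<Rightarrow> nat" and n where "rk ` E = {i. i < n}" and inj: "inj_on rk E"
    using finite_imp_inj_to_nat_seg[OF fin] by blast
  have p1: "p < 1"
  proof -
    have "0 < p ^ k" using ppos by simp
    then show ?thesis using peq by linarith
  qed
  obtain \<tau> where tau: "\<tau> \<ge> 0"
    and ha0: "(\<Prod>e\<in>E. 1 - measure_pmf.expectation (\<mu> e) (\<lambda>w. ind (\<tau> \<le> x e w))) \<le> 1 - p"
    and hb0: "1 - p \<le> (\<Prod>e\<in>E. 1 - measure_pmf.expectation (\<mu> e) (\<lambda>w. ind (\<tau> < x e w)))"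
    using choose_tau[OF fin False fs xnn p1 ppos] by blast
  define a where "a = (\<lambda>e. measure_pmf.expectation (\<mu> e) (\<lambda>w. ind (\<tau> \<le> x e w)))"
  define b where "b = (\<lambda>e. measure_pmf.expectation (\<mu> e) (\<lambda>w. ind (\<tau> < x e w)))"
  have ha: "(\<Prod>e\<in>E. 1 - a e) \<le> 1 - p" using ha0 unfolding a_def .
  have hb: "1 - p \<le> (\<Prod>e\<in>E. 1 - b e)" using hb0 unfolding b_def .
  have ab: "\<forall>e\<in>E. 0 \<le> b e \<and> b e \<le> a e \<and> a e \<le> 1"
  proof
    fix e assume eE: "e \<in> E"
    have fe: "finite (set_pmf (\<mu> e))" using fs eE by blast
    have "b e \<le> a e" unfolding a_def b_def
      by (rule integral_mono) (use fe in \<open>auto intro: integrable_measure_pmf_finite\<close>)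
    then show "0 \<le> b e \<and> b e \<le> a e \<and> a e \<le> 1"
      unfolding a_def b_def
      using exp_ind_bounds(1)[where M="\<mu> e" and P="\<lambda>w. \<tau> < x e w"]
        exp_ind_bounds(2)[where M="\<mu> e" and P="\<lambda>w. \<tau> \<le> x e w"] by simp
  qed
  define M where "M = (\<Sum>e\<in>E. measure_pmf.expectation (joint_pmf E k \<mu>) (\<lambda>\<omega>. hh E x rk \<tau> \<omega> e))"
  have Mnn: "M \<ge> 0" unfolding M_def
    by (intro sum_nonneg Bochner_Integration.integral_nonneg hh_nonneg)
  obtain W where W: "W \<subseteq> E" and key:
    "p * (\<tau> + M) \<le> \<tau> * (1 - (\<Prod>e\<in>E. 1 - (if e \<in> W then a e else b e)))
            + (\<Prod>e\<in>E. 1 - (if e \<in> W then a e else b e) / real k) * M"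
    using choose_W[OF fin kpos ppos peq tau Mnn ab ha hb] by blast
  define strict where "strict = (\<lambda>e. e \<notin> W)"
  define acc where "acc = threshold_acc x (\<lambda>_. \<tau>) strict"
  have qfeq: "qf \<mu> acc e = (if e \<in> W then a e else b e)" for e
    unfolding qf_def acc_def threshold_acc_def strict_def a_def b_def by (cases "e \<in> W") simp_all
  have accge: "\<And>e v. acc e v \<Longrightarrow> x e v \<ge> \<tau>"
    unfolding acc_def threshold_acc_def by (auto split: if_splits)
  have accgt: "\<And>e v. x e v > \<tau> \<Longrightarrow> acc e v"
    unfolding acc_def threshold_acc_def by auto
  show ?thesis
  proof (rule exI[of _ "\<lambda>_. \<tau>"], rule exI[of _ strict], rule exI[of _ rk], intro conjI allI impI)
    show "inj_on rk E" by (rule inj)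
    fix s assume adv0: "adversarial E k \<mu> x (threshold_acc x (\<lambda>_. \<tau>) strict) rk s"
    have adv: "adversarial E k \<mu> x acc rk s" using adv0 unfolding acc_def .
    let ?J = "joint_pmf E k \<mu>"
    have fsJ: "finite (set_pmf ?J)" by (rule finite_set_joint[OF fin kpos fs])
    have int: "integrable (measure_pmf ?J) f" for f :: "_ \<Rightarrow> real"
      by (rule integrable_measure_pmf_finite[OF fsJ])
    define Pr where "Pr = (\<lambda>\<omega>. principal E k x acc rk \<omega> (profile_acts E s \<omega>))"
    define L where "L = (\<lambda>\<omega>. \<tau> * ind (\<exists>e\<in>E. acc e (snd \<omega> e)) + (\<Sum>e\<in>E. hl E x rk acc \<tau> \<omega> e))"
    have s1: "measure_pmf.expectation ?J L \<le> measure_pmf.expectation ?J Pr"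
    proof (rule integral_mono_AE[OF int int])
      show "AE \<omega> in measure_pmf ?J. L \<omega> \<le> Pr \<omega>"
      proof (rule AE_pmfI)
        fix \<omega> assume om: "\<omega> \<in> set_pmf ?J"
        show "L \<omega> \<le> Pr \<omega>" unfolding L_def Pr_def
          by (rule PW1[OF fin inj kpos adv om accge accgt xnn])
      qed
    qed
    have s2: "measure_pmf.expectation ?J L =
        \<tau> * measure_pmf.expectation ?J (\<lambda>\<omega>. ind (\<exists>e\<in>E. acc e (snd \<omega> e)))
        + (\<Sum>e\<in>E. measure_pmf.expectation ?J (\<lambda>\<omega>. hl E x rk acc \<tau> \<omega> e))"
    proof -
      have "measure_pmf.expectation ?J L =
          measure_pmf.expectation ?J (\<lambda>\<omega>. \<tau> * ind (\<exists>e\<in>E. acc e (snd \<omega> e)))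
          + measure_pmf.expectation ?J (\<lambda>\<omega>. \<Sum>e\<in>E. hl E x rk acc \<tau> \<omega> e)"
        unfolding L_def by (rule Bochner_Integration.integral_add[OF int int])
      also have "measure_pmf.expectation ?J (\<lambda>\<omega>. \<tau> * ind (\<exists>e\<in>E. acc e (snd \<omega> e))) =
          \<tau> * measure_pmf.expectation ?J (\<lambda>\<omega>. ind (\<exists>e\<in>E. acc e (snd \<omega> e)))"
        by (rule Bochner_Integration.integral_mult_right_zero)
      also have "measure_pmf.expectation ?J (\<lambda>\<omega>. \<Sum>e\<in>E. hl E x rk acc \<tau> \<omega> e) =
          (\<Sum>e\<in>E. measure_pmf.expectation ?J (\<lambda>\<omega>. hl E x rk acc \<tau> \<omega> e))"
        by (rule Bochner_Integration.integral_sum) (rule int)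
      finally show ?thesis .
    qed
    have s3: "measure_pmf.expectation ?J (\<lambda>\<omega>. ind (\<exists>e\<in>E. acc e (snd \<omega> e))) =
        1 - (\<Prod>e\<in>E. 1 - (if e \<in> W then a e else b e))"
      using exp_anyacc[OF fin fs, of k acc] unfolding qfeq .
    define c where "c = (\<Prod>e\<in>E. 1 - (if e \<in> W then a e else b e) / real k)"
    have ceq: "c = (\<Prod>e'\<in>E. 1 - qf \<mu> acc e' / real k)" unfolding c_def qfeq ..
    have s4: "c * M \<le> (\<Sum>e\<in>E. measure_pmf.expectation ?J (\<lambda>\<omega>. hl E x rk acc \<tau> \<omega> e))"
    proof -
      have "c * M = (\<Sum>e\<in>E. c * measure_pmf.expectation ?J (\<lambda>\<omega>. hh E x rk \<tau> \<omega> e))"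
        unfolding M_def by (rule sum_distrib_left)
      also have "\<dots> \<le> (\<Sum>e\<in>E. measure_pmf.expectation ?J (\<lambda>\<omega>. hl E x rk acc \<tau> \<omega> e))"
      proof (rule sum_mono)
        fix e assume eE: "e \<in> E"
        show "c * measure_pmf.expectation ?J (\<lambda>\<omega>. hh E x rk \<tau> \<omega> e)
              \<le> measure_pmf.expectation ?J (\<lambda>\<omega>. hl E x rk acc \<tau> \<omega> e)"
          unfolding ceq by (rule step4[OF fin eE kpos fs accgt])
      qed
      finally show ?thesis .
    qed
    have s5: "measure_pmf.expectation ?J (opt E x) \<le> \<tau> + M"
    proof -
      have "measure_pmf.expectation ?J (opt E x) \<le>
            measure_pmf.expectation ?J (\<lambda>\<omega>. \<tau> + (\<Sum>e\<in>E. hh E x rk \<tau> \<omega> e))"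
        by (rule integral_mono[OF int int]) (rule PW2[OF fin inj tau])
      also have "\<dots> = measure_pmf.expectation ?J (\<lambda>\<omega>. \<tau>)
          + measure_pmf.expectation ?J (\<lambda>\<omega>. \<Sum>e\<in>E. hh E x rk \<tau> \<omega> e)"
        by (rule Bochner_Integration.integral_add[OF int int])
      also have "measure_pmf.expectation ?J (\<lambda>\<omega>. \<Sum>e\<in>E. hh E x rk \<tau> \<omega> e) = M"
        unfolding M_def by (rule Bochner_Integration.integral_sum) (rule int)
      finally show ?thesis by simp
    qed
    have "p * measure_pmf.expectation ?J (opt E x) \<le> p * (\<tau> + M)"
      using s5 ppos by (intro mult_left_mono) auto
    also have "\<dots> \<le> \<tau> * (1 - (\<Prod>e\<in>E. 1 - (if e \<in> W then a e else b e))) + c * M"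
      using key unfolding c_def by (simp add: mult.commute)
    also have "\<dots> \<le> measure_pmf.expectation ?J L"
      unfolding s2 s3 using s4 by simp
    also note s1
    finally show "p * measure_pmf.expectation ?J (opt E x) \<le> measure_pmf.expectation ?J
        (\<lambda>\<omega>. principal E k x (threshold_acc x (\<lambda>_. \<tau>) strict) rk \<omega> (profile_acts E s \<omega>))"
      unfolding Pr_def acc_def .
  qed
qed

end
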